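(* Let $n=m=1$, so that $A,B\in\mathbb{R}$ and $Q,R>0$ are scalars, and consider the setting described in the context with $q<q_c$ and an estimate $\hat q\in[0,q_c)$. Then the certainty-equivalence gain $\hat K=-(R+B^2\hat P)^{-1}AB\hat P$ mean-square stabilizes the system $x_{t+1}=Ax_t+\lambda_tBu_t$ under $u_t=\hat Kx_t$ if and only if $$Q+(1-q)R\hat K^2+(\hat q-q)(R+B^2\hat P)^{-1}A^2B^2\hat P^2>0 .$$ Moreover, if $\hat q\ge q$, this inequality holds.
   Context: Let $A\in\mathbb{R}^{n\times n}$, $B\in\mathbb{R}^{n\times m}$ with $(A,B)$ stabilizable, and let $Q\in\mathbb{R}^{n\times n}$, $R\in\mathbb{R}^{m\times m}$ be symmetric positive definite. Consider $x_{t+1}=Ax_t+\lambda_tBu_t$, $t=0,1,2,\dots$, where $x_0$ is a random vector with finite mean and covariance and $\{\lambda_t\}$ are i.i.d. Bernoulli random variables, independent of $x_0$, with $\mathcal{P}(\lambda_t=0)=q$, $\mathcal{P}(\lambda_t=1)=1-q$, $q\in(0,1)$. For $p\in[0,1)$ the modified Riccati equation with parameter $p$ is $X=Q+A^\top XA-(1-p)A^\top XB(R+B^\top XB)^{-1}B^\top XA$. The number $q_c$ is the critical loss probability: for every $p\in[0,q_c)$ this equation has a unique positive definite solution (one has $1/\prod_i|\lambda_i^u(A)|^2\le q_c\le 1/\max_i|\lambda_i^u(A)|^2$, where $\lambda_i^u(A)$ are the eigenvalues of $A$ of modulus $\ge1$). For an estimate $\hat q\in[0,q_c)$ of $q$,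 $\hat P$ denotes the positive definite solution of the modified Riccati equation with parameter $\hat q$, and $\hat K=-(R+B^\top\hat PB)^{-1}B^\top\hat PA$. The gain $\hat K$ mean-square stabilizes the system if the closed loop $x_{t+1}=(A+\lambda_tB\hat K)x_t$ satisfies $\lim_{t\to\infty}\mathbb{E}\{x_t^\top x_t\}=0$. *)

theory Defs
  imports "HOL-Probability.Probability"
begin

definition mare :: "real \<Rightarrow> real \<Rightarrow> real \<Rightarrow> real \<Rightarrow> real \<Rightarrow> real \<Rightarrow> bool" where
  "mare A B Q R p X \<longleftrightarrow>
     X = Q + A * X * A - (1 - p) * A * X * B * inverse (R + B * X * B) * B * X * A"

definition crit_prob :: "real \<Rightarrow> real \<Rightarrow> real \<Rightarrow> real \<Rightarrow> real" where
  "crit_prob A B Q R = Sup {p. 0 \<le> p \<and> p \<le> 1 \<and>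
      (\<forall>p'. 0 \<le> p' \<and> p' < p \<longrightarrow> (\<exists>!X. X > 0 \<and> mare A B Q R p' X))}"

definition mare_sol :: "real \<Rightarrow> real \<Rightarrow> real \<Rightarrow> real \<Rightarrow> real \<Rightarrow> real" where
  "mare_sol A B Q R p = (THE X. X > 0 \<and> mare A B Q R p X)"

definition ce_gain :: "real \<Rightarrow> real \<Rightarrow> real \<Rightarrow> real \<Rightarrow> real \<Rightarrow> real" where
  "ce_gain A B Q R p = - inverse (R + B * mare_sol A B Q R p * B) * B * mare_sol A B Q R p * A"

text \<open>Closed-loop state x_t on the canonical sample space
  omega = (x_0, (b_t)_t), with lambda_t = 1 iff b_t, and u_t = K x_t.\<close>
fun cl_state :: "real \<Rightarrow> real \<Rightarrow> real \<Rightarrow> real \<times> (nat \<Rightarrow> bool) \<Rightarrow> nat \<Rightarrow> real" where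
  "cl_state A B K \<omega> 0 = fst \<omega>"
| "cl_state A B K \<omega> (Suc t) =
     A * cl_state A B K \<omega> t + of_bool (snd \<omega> t) * B * (K * cl_state A B K \<omega> t)"

definition sample_space :: "real measure \<Rightarrow> real \<Rightarrow> (real \<times> (nat \<Rightarrow> bool)) measure" where
  "sample_space \<mu> q = \<mu> \<Otimes>\<^sub>M (\<Pi>\<^sub>M t\<in>UNIV. measure_pmf (bernoulli_pmf (1 - q)))"

definition ms_stabilizes :: "real \<Rightarrow> real \<Rightarrow> real \<Rightarrow> real \<Rightarrow> bool" where
  "ms_stabilizes q A B K \<longleftrightarrow>
     (\<forall>\<mu>. prob_space \<mu> \<and> sets \<mu> = sets borel \<and> integrable \<mu> (\<lambda>x. x) \<and> integrable \<mu> (\<lambda>x. x\<^sup>2) \<longrightarrow>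
        (\<lambda>t. \<integral>\<omega>. (cl_state A B K \<omega> t)\<^sup>2 \<partial>sample_space \<mu> q) \<longlonglongrightarrow> 0)"

end

theory Submission
  imports Defs
begin

lemma cl_state_prod:
  "cl_state A B K \<omega> t = fst \<omega> * (\<Prod>s<t. A + of_bool (snd \<omega> s) * B * K)"
  by (induction t) (auto simp: algebra_simps)

lemma meas_cl:
  assumes "sets \<mu> = sets borel"
  shows "(\<lambda>\<omega>. (cl_state A B K \<omega> t)\<^sup>2) \<in> borel_measurable (sample_space \<mu> q)"
proof -
  have m1[measurable]: "fst \<in> borel_measurable (sample_space \<mu> q)"
    unfolding sample_space_def
    using measurable_fst measurable_cong_sets[OF refl assms] by (metis measurable_cong_sets sets_pair_measure_cong)
  have m2[measurable]: "(\<lambda>\<omega>. snd \<omega> s) \<in> sample_space \<mu> q \<rightarrow>\<^sub>M count_space UNIV" for s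
  proof -
    have "(\<lambda>\<omega>. snd \<omega> s) \<in> sample_space \<mu> q \<rightarrow>\<^sub>M measure_pmf (bernoulli_pmf (1 - q))"
      unfolding sample_space_def by measurable
    then show ?thesis by (simp add: measurable_def)
  qed
  show ?thesis unfolding cl_state_prod
    by measurable
qed

lemma PB_nn:
  fixes q :: real and f :: "bool \<Rightarrow> real"
  assumes q: "0 \<le> q" "q \<le> 1" and f: "\<And>b. f b \<ge> 0"
  shows "(\<integral>\<^sup>+ y. ennreal (\<Prod>s<t. f (y s)) \<partial>(\<Pi>\<^sub>M t\<in>UNIV. measure_pmf (bernoulli_pmf (1 - q))))
         = ennreal ((f True * (1 - q) + f False * q) ^ t)"
proof -
  let ?M = "\<lambda>_::nat. measure_pmf (bernoulli_pmf (1 - q))"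
  interpret P: product_prob_space ?M UNIV
    by (simp add: product_prob_space_def product_prob_space_axioms_def product_sigma_finite_def
        prob_space_measure_pmf prob_space_imp_sigma_finite)
  have fm: "(\<lambda>z. \<Prod>s\<in>{..<t}. ennreal (f (z s))) \<in> borel_measurable (PiM {..<t} ?M)"
    by (intro borel_measurable_prod_ennreal) (simp add: measurable_def)
  have "(\<integral>\<^sup>+ y. ennreal (\<Prod>s<t. f (y s)) \<partial>PiM UNIV ?M)
      = (\<integral>\<^sup>+ y. (\<lambda>z. \<Prod>s\<in>{..<t}. ennreal (f (z s))) (restrict y {..<t}) \<partial>PiM UNIV ?M)"
    using f by (intro nn_integral_cong) (simp add: prod_ennreal)
  also have "\<dots> = integral\<^sup>N (distr (PiM UNIV ?M) (PiM {..<t} ?M) (\<lambda>y. restrict y {..<t}))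
                     (\<lambda>z. \<Prod>s\<in>{..<t}. ennreal (f (z s)))"
    by (rule nn_integral_distr[symmetric], rule measurable_restrict_subset, simp, simp add: P.distr_PiM_restrict_finite fm)
  also have "\<dots> = (\<integral>\<^sup>+ z. (\<Prod>s\<in>{..<t}. ennreal (f (z s))) \<partial>PiM {..<t} ?M)"
    by (simp add: P.distr_PiM_restrict_finite)
  also have "\<dots> = (\<Prod>s\<in>{..<t}. \<integral>\<^sup>+ b. ennreal (f b) \<partial>?M s)"
    by (rule P.product_nn_integral_prod) (auto simp: measurable_def)
  also have "\<dots> = (\<Prod>s\<in>{..<t}. ennreal (f True * (1 - q) + f False * q))"
  proof -
    have "(\<integral>\<^sup>+ b. ennreal (f b) \<partial>measure_pmf (bernoulli_pmf (1 - q)))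
        = ennreal (f True) * ennreal (1 - q) + ennreal (f False) * ennreal (1 - (1 - q))"
      using q by (subst nn_integral_bernoulli_pmf) auto
    also have "\<dots> = ennreal (f True * (1 - q) + f False * q)"
      using q f by (simp add: ennreal_mult' ennreal_plus)
    finally show ?thesis by simp
  qed
  also have "\<dots> = ennreal ((f True * (1 - q) + f False * q) ^ t)"
  proof -
    have c0: "0 \<le> f True * (1 - q) + f False * q" using q f by simp
    show ?thesis by (simp only: prod_constant card_lessThan) (rule ennreal_power[OF c0])
  qed
  finally show ?thesis .
qed

lemma E_cl:
  fixes \<mu> :: "real measure"
  assumes mu: "prob_space \<mu>" "sets \<mu> = sets borel" "integrable \<mu> (\<lambda>x. x\<^sup>2)"
    and q: "0 \<le> q" "q \<le> 1"
  shows "(\<integral>\<omega>. (cl_state A B K \<omega> t)\<^sup>2 \<partial>sample_space \<mu> q)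
       = (q * A\<^sup>2 + (1 - q) * (A + B * K)\<^sup>2) ^ t * (\<integral>x. x\<^sup>2 \<partial>\<mu>)"
proof -
  let ?PB = "\<Pi>\<^sub>M t\<in>UNIV. measure_pmf (bernoulli_pmf (1 - q))"
  let ?c = "\<lambda>b. (A + of_bool b * B * K)\<^sup>2"
  let ?\<rho> = "q * A\<^sup>2 + (1 - q) * (A + B * K)\<^sup>2"
  have \<rho>0: "0 \<le> ?\<rho>" using q by simp
  interpret PB: prob_space ?PB
    by (rule prob_space_PiM) (simp add: prob_space_measure_pmf)
  have sq: "(cl_state A B K \<omega> t)\<^sup>2 = (fst \<omega>)\<^sup>2 * (\<Prod>s<t. ?c (snd \<omega> s))" for \<omega>
    by (simp add: cl_state_prod power_mult_distrib prod_power_distrib)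
  have meas: "(\<lambda>\<omega>. ennreal ((cl_state A B K \<omega> t)\<^sup>2)) \<in> borel_measurable (\<mu> \<Otimes>\<^sub>M ?PB)"
    using meas_cl[OF mu(2), of A B K t q] unfolding sample_space_def by measurable
  have "(\<integral>\<omega>. (cl_state A B K \<omega> t)\<^sup>2 \<partial>sample_space \<mu> q)
      = enn2real (\<integral>\<^sup>+ \<omega>. ennreal ((cl_state A B K \<omega> t)\<^sup>2) \<partial>(\<mu> \<Otimes>\<^sub>M ?PB))"
    unfolding sample_space_def
    by (rule integral_eq_nn_integral) (use meas_cl[OF mu(2), of A B K t q] in \<open>simp_all add: sample_space_def\<close>)
  also have "(\<integral>\<^sup>+ \<omega>. ennreal ((cl_state A B K \<omega> t)\<^sup>2) \<partial>(\<mu> \<Otimes>\<^sub>M ?PB))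
      = (\<integral>\<^sup>+ x. \<integral>\<^sup>+ y. ennreal ((cl_state A B K (x, y) t)\<^sup>2) \<partial>?PB \<partial>\<mu>)"
    by (rule PB.nn_integral_fst[symmetric, OF meas])
  also have "\<dots> = (\<integral>\<^sup>+ x. ennreal (x\<^sup>2) * ennreal (?\<rho> ^ t) \<partial>\<mu>)"
  proof (rule nn_integral_cong)
    fix x
    have "(\<integral>\<^sup>+ y. ennreal ((cl_state A B K (x, y) t)\<^sup>2) \<partial>?PB)
        = (\<integral>\<^sup>+ y. ennreal (x\<^sup>2) * ennreal (\<Prod>s<t. ?c (y s)) \<partial>?PB)"
      by (intro nn_integral_cong) (simp add: sq ennreal_mult' prod_nonneg)
    also have "\<dots> = ennreal (x\<^sup>2) * (\<integral>\<^sup>+ y. ennreal (\<Prod>s<t. ?c (y s)) \<partial>?PB)"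
    proof (rule nn_integral_cmult)
      have [measurable]: "(\<lambda>y. y s) \<in> ?PB \<rightarrow>\<^sub>M count_space UNIV" for s
      proof -
        have "(\<lambda>y. y s) \<in> ?PB \<rightarrow>\<^sub>M measure_pmf (bernoulli_pmf (1 - q))" by measurable
        then show ?thesis by (simp add: measurable_def)
      qed
      show "(\<lambda>y. ennreal (\<Prod>s<t. ?c (y s))) \<in> borel_measurable ?PB" by measurable
    qed
    also have "\<dots> = ennreal (x\<^sup>2) * ennreal (?\<rho> ^ t)"
      using PB_nn[OF q, of ?c t] by (simp add: algebra_simps)
    finally show "(\<integral>\<^sup>+ y. ennreal ((cl_state A B K (x, y) t)\<^sup>2) \<partial>?PB) = ennreal (x\<^sup>2) * ennreal (?\<rho> ^ t)" .
  qed
  also have "\<dots> = (\<integral>\<^sup>+ x. ennreal (x\<^sup>2) \<partial>\<mu>) * ennreal (?\<rho> ^ t)"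
    by (rule nn_integral_multc) (simp add: measurable_cong_sets[OF mu(2) refl])
  also have "(\<integral>\<^sup>+ x. ennreal (x\<^sup>2) \<partial>\<mu>) = ennreal (\<integral>x. x\<^sup>2 \<partial>\<mu>)"
    by (rule nn_integral_eq_integral) (use mu in auto)
  finally show ?thesis
    using \<rho>0 by (simp add: ennreal_mult'[symmetric] zero_le_power integral_nonneg_AE mult.commute)
qed

lemma sol_props:
  assumes "0 \<le> qh" "qh < crit_prob A B Q R"
  shows "mare_sol A B Q R qh > 0 \<and> mare A B Q R qh (mare_sol A B Q R qh)"
proof -
  define S where "S = {p. 0 \<le> p \<and> p \<le> 1 \<and>
      (\<forall>p'. 0 \<le> p' \<and> p' < p \<longrightarrow> (\<exists>!X. X > 0 \<and> mare A B Q R p' X))}"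
  have ne: "0 \<in> S" unfolding S_def by auto
  have bdd: "bdd_above S" unfolding S_def by (rule bdd_aboveI[of _ 1]) auto
  have "qh < Sup S" using assms(2) unfolding crit_prob_def S_def by simp
  then obtain p where "p \<in> S" "qh < p" using less_cSupD[of S qh] ne by blast
  then have "\<exists>!X. X > 0 \<and> mare A B Q R qh X" using assms(1) unfolding S_def by auto
  then show ?thesis unfolding mare_sol_def by (rule theI')
qed

lemma ident:
  fixes A B Q R qh q P :: real
  assumes P: "P > 0" and R: "R > 0" and m: "mare A B Q R qh P"
  defines "K \<equiv> - inverse (R + B * P * B) * B * P * A"
  shows "Q + (1 - q) * R * K\<^sup>2 + (qh - q) * inverse (R + B\<^sup>2 * P) * A\<^sup>2 * B\<^sup>2 * P\<^sup>2
       = P * (1 - (q * A\<^sup>2 + (1 - q) * (A + B * K)\<^sup>2))"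
proof -
  have "B * P * B = P * B\<^sup>2" by (simp add: power2_eq_square)
  moreover have "P * B\<^sup>2 \<ge> 0" using P by simp
  ultimately have S: "R + B * P * B > 0" using R by linarith
  then have S': "R + B * P * B \<noteq> 0" by simp
  have Qeq: "Q = P - A * P * A + (1 - qh) * A * P * B * B * P * A / (R + B * P * B)"
    using m unfolding mare_def by (simp add: field_simps)
  define s where "s = R + B * P * B"
  have s0: "s \<noteq> 0" using S' s_def by simp
  have Rs: "R = s - B * P * B" using s_def by simp
  have e2: "R + B\<^sup>2 * P = s" using s_def by (simp add: power2_eq_square)
  show ?thesis
    unfolding K_def Qeq e2 s_def[symmetric] unfolding Rs using s0
    by (simp add: field_simps power2_eq_square)
qed

lemma ms_iff:
  assumes q: "0 \<le> q" "q \<le> 1"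
  shows "ms_stabilizes q A B K \<longleftrightarrow> q * A\<^sup>2 + (1 - q) * (A + B * K)\<^sup>2 < 1"
proof
  let ?\<rho> = "q * A\<^sup>2 + (1 - q) * (A + B * K)\<^sup>2"
  have \<rho>0: "0 \<le> ?\<rho>" using q by simp
  assume ms: "ms_stabilizes q A B K"
  let ?\<mu> = "return borel (1::real)"
  have "prob_space ?\<mu>" by (rule prob_space_return) simp
  moreover have "integrable ?\<mu> (\<lambda>x. x)" "integrable ?\<mu> (\<lambda>x. x\<^sup>2)"
  proof -
    have mret: "f \<in> borel_measurable ?\<mu>" if "f \<in> borel_measurable borel" for f :: "real \<Rightarrow> real"
      using that unfolding measurable_cong_sets[OF sets_return refl] .
    show "integrable ?\<mu> (\<lambda>x. x)"
      by (subst integrable_iff_bounded) (simp add: mret nn_integral_return)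
    show "integrable ?\<mu> (\<lambda>x. x\<^sup>2)"
      by (subst integrable_iff_bounded) (simp add: mret nn_integral_return)
  qed
  ultimately have lim: "(\<lambda>t. \<integral>\<omega>. (cl_state A B K \<omega> t)\<^sup>2 \<partial>sample_space ?\<mu> q) \<longlonglongrightarrow> 0"
    using ms unfolding ms_stabilizes_def by auto
  have "(\<lambda>t. \<integral>\<omega>. (cl_state A B K \<omega> t)\<^sup>2 \<partial>sample_space ?\<mu> q) = (\<lambda>t. ?\<rho> ^ t)"
  proof
    fix t
    have "(\<integral>\<omega>. (cl_state A B K \<omega> t)\<^sup>2 \<partial>sample_space ?\<mu> q) = ?\<rho> ^ t * (\<integral>x. x\<^sup>2 \<partial>?\<mu>)"
      by (rule E_cl) (use q \<open>prob_space ?\<mu>\<close> \<open>integrable ?\<mu> (\<lambda>x. x\<^sup>2)\<close> in auto)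
    then show "(\<integral>\<omega>. (cl_state A B K \<omega> t)\<^sup>2 \<partial>sample_space ?\<mu> q) = ?\<rho> ^ t"
      by (simp add: integral_return)
  qed
  with lim have "(\<lambda>t. ?\<rho> ^ t) \<longlonglongrightarrow> 0" by simp
  then have "eventually (\<lambda>t. ?\<rho> ^ t < 1) sequentially"
    by (rule order_tendstoD) simp
  then obtain t where "?\<rho> ^ t < 1" by (auto dest: eventually_happens)
  then show "?\<rho> < 1" by (metis not_less one_le_power)
next
  let ?\<rho> = "q * A\<^sup>2 + (1 - q) * (A + B * K)\<^sup>2"
  have \<rho>0: "0 \<le> ?\<rho>" using q by simp
  assume r: "?\<rho> < 1"
  show "ms_stabilizes q A B K"
    unfolding ms_stabilizes_def
  proof (intro allI impI)
    fix \<mu> :: "real measure"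
    assume mu: "prob_space \<mu> \<and> sets \<mu> = sets borel \<and> integrable \<mu> (\<lambda>x. x) \<and> integrable \<mu> (\<lambda>x. x\<^sup>2)"
    have "(\<lambda>t. \<integral>\<omega>. (cl_state A B K \<omega> t)\<^sup>2 \<partial>sample_space \<mu> q) = (\<lambda>t. ?\<rho> ^ t * (\<integral>x. x\<^sup>2 \<partial>\<mu>))"
      using E_cl[of \<mu> q] mu q by auto
    moreover have "(\<lambda>t. ?\<rho> ^ t * (\<integral>x. x\<^sup>2 \<partial>\<mu>)) \<longlonglongrightarrow> 0"
      by (intro tendsto_mult_left_zero LIMSEQ_power_zero) (use r \<rho>0 in auto)
    ultimately show "(\<lambda>t. \<integral>\<omega>. (cl_state A B K \<omega> t)\<^sup>2 \<partial>sample_space \<mu> q) \<longlonglongrightarrow> 0" by simp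
  qed
qed

theorem theorem1:
  fixes A B Q R q qh :: real
  assumes stabilizable: "\<exists>K. \<bar>A + B * K\<bar> < 1"
    and Q: "Q > 0" and R: "R > 0"
    and q: "0 < q" "q < 1" "q < crit_prob A B Q R"
    and qh: "0 \<le> qh" "qh < crit_prob A B Q R"
  shows "(ms_stabilizes q A B (ce_gain A B Q R qh) \<longleftrightarrow>
           Q + (1 - q) * R * (ce_gain A B Q R qh)\<^sup>2
             + (qh - q) * inverse (R + B\<^sup>2 * mare_sol A B Q R qh) * A\<^sup>2 * B\<^sup>2 * (mare_sol A B Q R qh)\<^sup>2 > 0)
         \<and> (qh \<ge> q \<longrightarrow>
           Q + (1 - q) * R * (ce_gain A B Q R qh)\<^sup>2
             + (qh - q) * inverse (R + B\<^sup>2 * mare_sol A B Q R qh) * A\<^sup>2 * B\<^sup>2 * (mare_sol A B Q R qh)\<^sup>2 > 0)"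
proof -
  define P where "P = mare_sol A B Q R qh"
  define K where "K = ce_gain A B Q R qh"
  have KP: "K = - inverse (R + B * P * B) * B * P * A"
    unfolding K_def P_def ce_gain_def by simp
  have P: "P > 0" "mare A B Q R qh P" using sol_props[OF qh] unfolding P_def by auto
  have id: "Q + (1 - q) * R * K\<^sup>2 + (qh - q) * inverse (R + B\<^sup>2 * P) * A\<^sup>2 * B\<^sup>2 * P\<^sup>2
       = P * (1 - (q * A\<^sup>2 + (1 - q) * (A + B * K)\<^sup>2))"
    unfolding KP by (rule ident[OF P(1) R P(2)])
  have ms: "ms_stabilizes q A B K \<longleftrightarrow> q * A\<^sup>2 + (1 - q) * (A + B * K)\<^sup>2 < 1"
    by (rule ms_iff) (use q in auto)
  have part1: "ms_stabilizes q A B K \<longleftrightarrow>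
      Q + (1 - q) * R * K\<^sup>2 + (qh - q) * inverse (R + B\<^sup>2 * P) * A\<^sup>2 * B\<^sup>2 * P\<^sup>2 > 0"
    unfolding ms id using P(1) by (simp add: zero_less_mult_iff)
  have part2: "Q + (1 - q) * R * K\<^sup>2 + (qh - q) * inverse (R + B\<^sup>2 * P) * A\<^sup>2 * B\<^sup>2 * P\<^sup>2 > 0"
    if "qh \<ge> q"
  proof -
    have "R + B\<^sup>2 * P > 0" using R P(1) by (simp add: add_pos_nonneg)
    then have "(qh - q) * inverse (R + B\<^sup>2 * P) * A\<^sup>2 * B\<^sup>2 * P\<^sup>2 \<ge> 0"
      using that by simp
    moreover have "(1 - q) * R * K\<^sup>2 \<ge> 0" using q R by simp
    ultimately show ?thesis using Q by linarith
  qed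
  show ?thesis using part1 part2 unfolding K_def P_def by blast
qed

end
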